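(* Let $n_1,\dots,n_m$ be positive integers, $N=n_1+\cdots+n_m$, and let $N_1,\dots,N_m$ be positive integers with $N_j\ge N-1$ for $j=1,\dots,m$. Define $Q(z)=\sum_{k=0}^N a_kz^k$ by $a_N=1$ and, for $k=0,1,\dots,N-1$, \[ a_{N-k-1}=\sum_{\ell=k}^{N-1}(-1)^{\ell+1}\frac{(\alpha_0-1)_{\ell-k}}{(\ell-k)!}\,\frac{(\alpha_0+\ell+1)_{N-\ell-1}}{(N-\ell-1)!}\prod_{j=1}^m\frac{(\alpha_j+\alpha_0+N_j-N+\ell+1)_{n_j}}{(\alpha_j+N_j-N+1)_{n_j}}, \] and for $j=1,\dots,m$ define $P_j(z)=\sum_{\mu=0}^{N_j}c_{j\mu}z^\mu$ with \[ c_{j\mu}=\sum_{k=0}^{\min\{N,\mu\}}a_k\frac{(\alpha_j)_{\mu-k}}{(\alpha_j+\alpha_0)_{\mu-k}}. \] Then $Q\neq0$, $\deg Q\le N$, $\deg P_j\le N_j$, and, as formal power series in $\mathbb{Q}[[z]]$, $\operatorname{ord}_{z=0}\big(Q(z)\varphi_j(z)-P_j(z)\big)\ge N_j+n_j+1$ for $j=1,\dots,m$. That is, $Q,P_1,\dots,P_m$ are type $(N;N_1,\dots,N_m)$ Padé approximation polynomials of the second kind for $\varphi_1,\dots,\varphi_m$.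
   Context: Let $m\ge1$ and let $\alpha_0,\alpha_1,\dots,\alpha_m$ be positive rational numbers with $\alpha_i-\alpha_j\notin\mathbb{Z}$ for $1\le i<j\le m$. Pochhammer symbol: $(x)_0=1$, $(x)_n=x(x+1)\cdots(x+n-1)$ for $n\ge1$. Define the formal power series $\varphi_j(z)=\sum_{n=0}^\infty\frac{(\alpha_j)_n}{(\alpha_j+\alpha_0)_n}z^n$, $j=1,\dots,m$. $\operatorname{ord}$ denotes the order of vanishing at $z=0$. Polynomials $Q\ne0,P_1,\dots,P_m$ are called type $(N;N_1,\dots,N_m)$ Padé approximation polynomials of the second kind for $\varphi_1,\dots,\varphi_m$ if $\deg Q\le N$, $\deg P_j\le N_j$ and $\operatorname{ord}(Q\varphi_j-P_j)\ge N_j+n_j+1$ for all $j$. *)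

theory Defs
  imports "HOL-Computational_Algebra.Computational_Algebra"
begin

text \<open>Indices: alpha 0 is alpha_0, alpha j (1 <= j <= m) the others; n j, NN j for j in 1..m.\<close>

definition phi :: "rat \<Rightarrow> rat \<Rightarrow> rat fps" where
  "phi a0 aj = Abs_fps (\<lambda>k. pochhammer aj k / pochhammer (aj + a0) k)"

definition totN :: "nat \<Rightarrow> (nat \<Rightarrow> nat) \<Rightarrow> nat" where
  "totN m n = (\<Sum>j=1..m. n j)"

definition padeA :: "nat \<Rightarrow> (nat \<Rightarrow> rat) \<Rightarrow> (nat \<Rightarrow> nat) \<Rightarrow> (nat \<Rightarrow> nat) \<Rightarrow> nat \<Rightarrow> rat" where
  "padeA m alpha n NN i =
     (let N = totN m n in
      if i = N then 1
      else if i < N then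
        (let k = N - i - 1 in
          \<Sum>l=k..N-1. (-1) ^ (l + 1)
             * (pochhammer (alpha 0 - 1) (l - k) / fact (l - k))
             * (pochhammer (alpha 0 + of_nat l + 1) (N - l - 1) / fact (N - l - 1))
             * (\<Prod>j=1..m. pochhammer (alpha j + alpha 0 + of_nat (NN j) - of_nat N + of_nat l + 1) (n j)
                           / pochhammer (alpha j + of_nat (NN j) - of_nat N + 1) (n j)))
      else 0)"

definition padeQ :: "nat \<Rightarrow> (nat \<Rightarrow> rat) \<Rightarrow> (nat \<Rightarrow> nat) \<Rightarrow> (nat \<Rightarrow> nat) \<Rightarrow> rat poly" where
  "padeQ m alpha n NN = (\<Sum>k\<le>totN m n. monom (padeA m alpha n NN k) k)"

definition padeC :: "nat \<Rightarrow> (nat \<Rightarrow> rat) \<Rightarrow> (nat \<Rightarrow> nat) \<Rightarrow> (nat \<Rightarrow> nat) \<Rightarrow> nat \<Rightarrow> nat \<Rightarrow> rat" where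
  "padeC m alpha n NN j \<mu> =
     (\<Sum>k=0..min (totN m n) \<mu>. padeA m alpha n NN k
        * (pochhammer (alpha j) (\<mu> - k) / pochhammer (alpha j + alpha 0) (\<mu> - k)))"

definition padeP :: "nat \<Rightarrow> (nat \<Rightarrow> rat) \<Rightarrow> (nat \<Rightarrow> nat) \<Rightarrow> (nat \<Rightarrow> nat) \<Rightarrow> nat \<Rightarrow> rat poly" where
  "padeP m alpha n NN j = (\<Sum>\<mu>\<le>NN j. monom (padeC m alpha n NN j \<mu>) \<mu>)"

end

theory Submission
  imports Defs
begin


lemma poch_div_gchoose: "pochhammer (a::rat) k / fact k = (-1)^k * ((- a) gchoose k)"
  by (simp add: gbinomial_pochhammer)

lemma vand:
  fixes a :: rat
  shows "(\<Sum>i=0..d. pochhammer (a-1) (d-i)/fact(d-i) * (pochhammer (1-a) i / fact i))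
         = (if d = 0 then 1 else 0)"
proof -
  have "(\<Sum>i=0..d. pochhammer (a-1) (d-i)/fact(d-i) * (pochhammer (1-a) i / fact i))
      = (\<Sum>i=0..d. (-1)^d * (((a-1) gchoose i) * ((1-a) gchoose (d-i))))"
  proof (rule sum.cong)
    fix i assume "i \<in> {0..d}"
    hence "(-1::rat)^(d-i) * (-1)^i = (-1)^d" by (simp add: power_add[symmetric])
    thus "pochhammer (a-1) (d-i)/fact(d-i) * (pochhammer (1-a) i / fact i) =
       (-1)^d * (((a-1) gchoose i) * ((1-a) gchoose (d-i)))"
      unfolding poch_div_gchoose by (simp add: algebra_simps)
  qed simp
  also have "\<dots> = (-1)^d * ((0::rat) gchoose d)"
    by (simp add: sum_distrib_left[symmetric] gbinomial_Vandermonde)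
  also have "\<dots> = (if d = 0 then 1 else 0)" by (cases d) auto
  finally show ?thesis .
qed

lemma poly_pochhammer: "poly (pochhammer p k) x = pochhammer (poly p x) k"
  by (induction k) (simp_all add: pochhammer_Suc)

lemma degree_pochhammer: "degree p \<le> 1 \<Longrightarrow> degree (pochhammer (p::rat poly) k) \<le> k"
proof (induction k)
  case (Suc k)
  have "degree (pochhammer p (Suc k)) \<le> degree (pochhammer p k) + degree (p + of_nat k)"
    by (simp add: pochhammer_Suc degree_mult_le)
  moreover have "degree (p + of_nat k) \<le> 1" using Suc.prems
    by (metis degree_add_le degree_of_nat le_zero_eq zero_le)
  ultimately show ?case using Suc by simp
qed simp



definition AA :: "rat \<Rightarrow> nat \<Rightarrow> (nat \<Rightarrow> rat) \<Rightarrow> nat \<Rightarrow> rat" where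
 "AA a0 N w i = (if i = N then 1 else if i < N then
    (\<Sum>l=N-i-1..N-1. (-1)^(l+1) * (pochhammer (a0-1) (l-(N-i-1))/fact (l-(N-i-1)))
        * (pochhammer (a0 + of_nat l + 1) (N-l-1)/fact(N-l-1)) * w l) else 0)"

definition ee :: "rat \<Rightarrow> nat \<Rightarrow> nat \<Rightarrow> rat \<Rightarrow> rat" where
 "ee a0 N i b = pochhammer b (N-i) * pochhammer (b + a0 + of_nat (N-i)) i"

definition TT :: "rat \<Rightarrow> nat \<Rightarrow> (nat \<Rightarrow> rat) \<Rightarrow> rat \<Rightarrow> rat" where
 "TT a0 N w b = (\<Sum>i\<le>N. AA a0 N w i * ee a0 N i b)"

definition cc :: "rat \<Rightarrow> nat \<Rightarrow> rat" where "cc a0 d = pochhammer (a0-1) d / fact d"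
definition DD :: "rat \<Rightarrow> nat \<Rightarrow> (nat \<Rightarrow> rat) \<Rightarrow> nat \<Rightarrow> rat" where
 "DD a0 N w l = (-1)^(l+1) * (pochhammer (a0 + of_nat l + 1) (N-l-1)/fact(N-l-1)) * w l"

lemma TT0: "TT a0 N w 0 = pochhammer a0 N"
proof -
  have "TT a0 N w 0 = (\<Sum>i\<in>{N}. AA a0 N w i * ee a0 N i 0)"
    unfolding TT_def
    by (rule sum.mono_neutral_right) (auto simp: ee_def pochhammer_0_left)
  thus ?thesis by (simp add: AA_def ee_def)
qed

lemma TT_split: "TT a0 N w b = ee a0 N N b +
   (\<Sum>l<N. DD a0 N w l * (\<Sum>k\<le>l. cc a0 (l-k) * ee a0 N (N - Suc k) b))"
proof -
  have "TT a0 N w b = (\<Sum>i<N. AA a0 N w i * ee a0 N i b) + ee a0 N N b"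
    unfolding TT_def lessThan_Suc_atMost[symmetric] by (simp add: AA_def)
  also have "(\<Sum>i<N. AA a0 N w i * ee a0 N i b) = (\<Sum>k<N. AA a0 N w (N - Suc k) * ee a0 N (N - Suc k) b)"
    by (rule sum.nat_diff_reindex[symmetric])
  also have "\<dots> = (\<Sum>k<N. \<Sum>l\<in>{l. l \<in> {..<N} \<and> k \<le> l}. cc a0 (l-k) * DD a0 N w l * ee a0 N (N - Suc k) b)"
  proof (rule sum.cong[OF refl])
    fix k assume k: "k \<in> {..<N}"
    have s: "{l. l \<in> {..<N} \<and> k \<le> l} = {k..N-1}" using k by auto
    have "AA a0 N w (N - Suc k) = (\<Sum>l=k..N-1. cc a0 (l-k) * DD a0 N w l)"
      using k by (auto simp: AA_def cc_def DD_def intro!: sum.cong)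
    thus "AA a0 N w (N - Suc k) * ee a0 N (N - Suc k) b =
        (\<Sum>l\<in>{l. l \<in> {..<N} \<and> k \<le> l}. cc a0 (l-k) * DD a0 N w l * ee a0 N (N - Suc k) b)"
      unfolding s by (simp add: sum_distrib_right)
  qed
  also have "\<dots> = (\<Sum>l<N. \<Sum>k\<in>{k. k \<in> {..<N} \<and> k \<le> l}. cc a0 (l-k) * DD a0 N w l * ee a0 N (N - Suc k) b)"
    by (rule sum.swap_restrict) auto
  also have "\<dots> = (\<Sum>l<N. DD a0 N w l * (\<Sum>k\<le>l. cc a0 (l-k) * ee a0 N (N - Suc k) b))"
  proof (rule sum.cong[OF refl])
    fix l assume l: "l \<in> {..<N}"
    have s: "{k. k \<in> {..<N} \<and> k \<le> l} = {..l}" using l by auto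
    show "(\<Sum>k\<in>{k. k \<in> {..<N} \<and> k \<le> l}. cc a0 (l-k) * DD a0 N w l * ee a0 N (N - Suc k) b) =
        DD a0 N w l * (\<Sum>k\<le>l. cc a0 (l-k) * ee a0 N (N - Suc k) b)"
      unfolding s by (simp add: sum_distrib_left algebra_simps)
  qed
  finally show ?thesis by simp
qed



lemma poch_of_nat_Suc: "pochhammer (of_nat (Suc i) :: rat) j = fact (i + j) / fact i"
proof -
  have "fact (i + j) = (pochhammer 1 (i+j) :: rat)" by (simp add: pochhammer_fact)
  also have "\<dots> = pochhammer 1 i * pochhammer (1 + of_nat i) j" by (rule pochhammer_product')
  finally show ?thesis by (simp add: pochhammer_fact[symmetric] add.commute)
qed

lemma ee_pt_zero:
  assumes "l' < N" "k < l'"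
  shows "ee a0 N (N - Suc k) (- a0 - of_nat l') = 0"
proof -
  have "- a0 - of_nat l' + a0 + of_nat (N - (N - Suc k)) = - of_nat (l' - Suc k)"
    using assms by (simp add: of_nat_diff)
  moreover have "pochhammer (- of_nat (l' - Suc k) :: rat) (N - Suc k) = 0"
    by (rule pochhammer_of_nat_eq_0_lemma) (use assms in auto)
  ultimately show ?thesis unfolding ee_def by simp
qed

lemma ee_pt:
  assumes "l' < N" "k < N" "l' \<le> k"
  shows "ee a0 N (N - Suc k) (- a0 - of_nat l') =
     (-1)^Suc l' * pochhammer a0 (Suc l') * fact (N - Suc l') * (pochhammer (1 - a0) (k - l') / fact (k - l'))"
proof -
  define i where "i = k - l'"
  have k: "k = l' + i" using assms i_def by simp
  have e1: "- a0 - of_nat l' + a0 + of_nat (N - (N - Suc k)) = of_nat (Suc i)"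
    using assms k by (simp add: of_nat_diff)
  have e2: "pochhammer (of_nat (Suc i) :: rat) (N - Suc k) = fact (N - Suc l') / fact i"
    unfolding poch_of_nat_Suc using assms k by (simp add: Suc_diff_Suc)
  have "pochhammer (- a0 - of_nat l') (N - (N - Suc k)) = pochhammer (- a0 - of_nat l') (Suc l' + i)"
    using assms k by simp
  also have "\<dots> = pochhammer (- a0 - of_nat l') (Suc l') * pochhammer (1 - a0) i"
    by (subst pochhammer_product') simp
  also have "pochhammer (- a0 - of_nat l') (Suc l') = (-1)^Suc l' * pochhammer a0 (Suc l')"
    using pochhammer_minus[of "a0 + of_nat l'" "Suc l'"] by simp
  finally show ?thesis unfolding ee_def e1 e2 i_def[symmetric]
    by (simp add: algebra_simps)
qed

lemma G_pt:
  assumes "l' < N" "l < N"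
  shows "(\<Sum>k\<le>l. cc a0 (l-k) * ee a0 N (N - Suc k) (- a0 - of_nat l')) =
    (if l = l' then (-1)^Suc l' * pochhammer a0 (Suc l') * fact (N - Suc l') else 0)"
proof (cases "l' \<le> l")
  case False
  thus ?thesis using assms by (auto intro!: sum.neutral simp: ee_pt_zero)
next
  case True
  define K where "K = (-1)^Suc l' * pochhammer a0 (Suc l') * (fact (N - Suc l') :: rat)"
  have "(\<Sum>k\<le>l. cc a0 (l-k) * ee a0 N (N - Suc k) (- a0 - of_nat l')) =
        (\<Sum>k=l'..l. cc a0 (l-k) * ee a0 N (N - Suc k) (- a0 - of_nat l'))"
    by (rule sum.mono_neutral_right) (use assms in \<open>auto simp: ee_pt_zero\<close>)
  also have "\<dots> = (\<Sum>k=l'..l. K * (cc a0 (l-k) * (pochhammer (1 - a0) (k - l') / fact (k - l'))))"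
    by (rule sum.cong[OF refl]) (use assms in \<open>auto simp: ee_pt K_def\<close>)
  also have "\<dots> = K * (\<Sum>i=0..l-l'. cc a0 (l - l' - i) * (pochhammer (1 - a0) i / fact i))"
    by (subst sum.atLeastAtMost_shift_0[OF True]) (simp add: sum_distrib_left)
  also have "(\<Sum>i=0..l-l'. cc a0 (l - l' - i) * (pochhammer (1 - a0) i / fact i)) = (if l - l' = 0 then 1 else 0)"
    unfolding cc_def by (rule vand)
  finally show ?thesis using True K_def by auto
qed

lemma TT_pt:
  assumes "l' < N"
  shows "TT a0 N w (- a0 - of_nat l') = pochhammer a0 N * w l'"
proof -
  have z: "ee a0 N N (- a0 - of_nat l') = 0"
    unfolding ee_def using assms by (simp add: pochhammer_of_nat_eq_0_lemma)
  have "TT a0 N w (- a0 - of_nat l') = (\<Sum>l<N. DD a0 N w l *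
     (if l = l' then (-1)^Suc l' * pochhammer a0 (Suc l') * fact (N - Suc l') else 0))"
    unfolding TT_split z using assms by (auto intro!: sum.cong simp: G_pt)
  also have "\<dots> = DD a0 N w l' * ((-1)^Suc l' * pochhammer a0 (Suc l') * fact (N - Suc l'))"
    using assms by (simp add: if_distrib sum.delta cong: if_cong)
  also have "\<dots> = pochhammer a0 (Suc l') * pochhammer (a0 + of_nat (Suc l')) (N - Suc l') * w l'"
    unfolding DD_def by (simp add: algebra_simps)
  also have "pochhammer a0 (Suc l') * pochhammer (a0 + of_nat (Suc l')) (N - Suc l') = pochhammer a0 N"
    using pochhammer_product'[of a0 "Suc l'" "N - Suc l'"] assms by simp
  finally show ?thesis .
qed



lemma TT_eq:
  fixes Wp :: "rat poly"
  assumes a0: "a0 > 0" and dW: "degree Wp \<le> N" and W0: "poly Wp 0 = 1"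
    and Ww: "\<And>l. l < N \<Longrightarrow> poly Wp (- a0 - of_nat l) = w l"
  shows "TT a0 N w b = pochhammer a0 N * poly Wp b"
proof -
  define Tp where "Tp = (\<Sum>i\<le>N. smult (AA a0 N w i)
      (pochhammer [:0,1:] (N-i) * pochhammer [:a0 + of_nat (N-i), 1:] i))"
  have pT: "poly Tp x = TT a0 N w x" for x
    unfolding Tp_def TT_def ee_def by (simp add: poly_sum poly_pochhammer algebra_simps)
  have dT: "degree Tp \<le> N"
    unfolding Tp_def
  proof (rule degree_sum_le)
    fix i assume "i \<in> {..N}"
    have "degree (pochhammer [:0,1:] (N-i) * pochhammer [:a0 + of_nat (N-i), 1:] i) \<le> (N - i) + i"
      by (rule order.trans[OF degree_mult_le add_mono]) (auto intro!: degree_pochhammer)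
    thus "degree (smult (AA a0 N w i) (pochhammer [:0,1:] (N-i) * pochhammer [:a0 + of_nat (N-i), 1:] i)) \<le> N"
      using \<open>i \<in> {..N}\<close> by (metis degree_smult_le le_add_diff_inverse2 atMost_iff order.trans)
  qed simp
  define A where "A = insert 0 ((\<lambda>l. - a0 - of_nat l) ` {..<N})"
  have inj: "inj_on (\<lambda>l. - a0 - of_nat l) {..<N}" by (auto simp: inj_on_def)
  have "0 \<notin> (\<lambda>l. - a0 - of_nat l) ` {..<N}" 
  proof (rule notI)
    assume "0 \<in> (\<lambda>l. - a0 - of_nat l) ` {..<N}"
    then obtain l where "0 = - a0 - (of_nat l :: rat)" by auto
    hence "a0 = - of_nat l" by simp
    moreover have "(0::rat) \<le> of_nat l" by simp
    ultimately show False using a0 by simp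
  qed
  hence cA: "card A = Suc N" unfolding A_def using inj by (simp add: card_image)
  have "Tp = smult (pochhammer a0 N) Wp"
  proof (rule poly_eqI_degree[of A])
    fix x assume "x \<in> A"
    then show "poly Tp x = poly (smult (pochhammer a0 N) Wp) x"
      unfolding A_def using W0 by (auto simp: pT TT0 TT_pt Ww)
  next
    show "degree Tp < card A" using dT cA by simp
    show "degree (smult (pochhammer a0 N) Wp) < card A" using dW cA
      by (metis degree_smult_le le_imp_less_Suc order.trans)
  qed
  hence "poly Tp b = pochhammer a0 N * poly Wp b" by simp
  thus ?thesis by (simp add: pT)
qed



lemma AA_big: "N < i \<Longrightarrow> AA a0 N w i = 0" by (simp add: AA_def)

lemma aux: "pd \<noteq> 0 \<Longrightarrow> (x::rat) * (p1*pb/(p2*pc)) = p1/p2/(pc*pd) * (x*(pb*pd))"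
  by simp

lemma conv_TT:
  fixes al a0 :: rat
  assumes al: "al > 0" and a0: "a0 > 0" and Nm: "N \<le> mu"
  shows "(\<Sum>i=0..mu. AA a0 N w i * (pochhammer al (mu-i) / pochhammer (al+a0) (mu-i))) =
    pochhammer al (mu-N) / pochhammer (al+a0) (mu-N) / pochhammer (al + of_nat (mu-N) + a0) N
      * TT a0 N w (al + of_nat (mu-N))"
proof -
  define b where "b = al + of_nat (mu - N)"
  have bpos: "b + a0 > 0" using al a0 b_def by (simp add: add_pos_nonneg)
  have "(\<Sum>i=0..mu. AA a0 N w i * (pochhammer al (mu-i) / pochhammer (al+a0) (mu-i))) =
        (\<Sum>i\<in>{..N}. AA a0 N w i * (pochhammer al (mu-i) / pochhammer (al+a0) (mu-i)))"
    by (rule sum.mono_neutral_right) (use Nm in \<open>auto simp: AA_big\<close>)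
  also have "\<dots> = (\<Sum>i\<in>{..N}. pochhammer al (mu-N) / pochhammer (al+a0) (mu-N) / pochhammer (b + a0) N
      * (AA a0 N w i * ee a0 N i b))"
  proof (rule sum.cong[OF refl])
    fix i assume "i \<in> {..N}"
    hence i: "i \<le> N" by simp
    have e1: "pochhammer al (mu-i) = pochhammer al (mu-N) * pochhammer b (N-i)"
      using pochhammer_product'[of al "mu-N" "N-i"] i Nm b_def by simp
    have bb: "al + a0 + of_nat (mu - N) = b + a0" by (simp add: b_def)
    have e2: "pochhammer (al+a0) (mu-i) = pochhammer (al+a0) (mu-N) * pochhammer (b+a0) (N-i)"
      using pochhammer_product'[of "al+a0" "mu-N" "N-i"] i Nm unfolding bb by simp
    have e3: "pochhammer (b+a0) N = pochhammer (b+a0) (N-i) * pochhammer (b + a0 + of_nat (N-i)) i"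
      using pochhammer_product'[of "b+a0" "N-i" i] i by simp
    have n1: "pochhammer (al+a0) (mu-N) \<noteq> 0" using al a0 by (simp add: pochhammer_eq_0_iff)
    have n2: "pochhammer (b+a0) (N-i) > 0" using bpos by (rule pochhammer_pos)
    have n3: "pochhammer (b + a0 + of_nat (N-i)) i > 0" using bpos by (intro pochhammer_pos) simp
    show "AA a0 N w i * (pochhammer al (mu-i) / pochhammer (al+a0) (mu-i)) =
      pochhammer al (mu-N) / pochhammer (al+a0) (mu-N) / pochhammer (b + a0) N * (AA a0 N w i * ee a0 N i b)"
      unfolding e1 e2 e3 ee_def by (rule aux) (use n3 in simp)
  qed
  also have "\<dots> = pochhammer al (mu-N) / pochhammer (al+a0) (mu-N) / pochhammer (b + a0) N * TT a0 N w b"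
    unfolding TT_def by (simp add: sum_distrib_left)
  finally show ?thesis by (simp add: b_def)
qed



theorem theorem1:
  fixes m :: nat and alpha :: "nat \<Rightarrow> rat" and n NN :: "nat \<Rightarrow> nat"
  assumes "m \<ge> 1"
    and "\<And>i. i \<le> m \<Longrightarrow> alpha i > 0"
    and "\<And>i j. 1 \<le> i \<Longrightarrow> i < j \<Longrightarrow> j \<le> m \<Longrightarrow> alpha i - alpha j \<notin> \<int>"
    and "\<And>j. 1 \<le> j \<Longrightarrow> j \<le> m \<Longrightarrow> n j > 0"
    and "\<And>j. 1 \<le> j \<Longrightarrow> j \<le> m \<Longrightarrow> NN j > 0"
    and "\<And>j. 1 \<le> j \<Longrightarrow> j \<le> m \<Longrightarrow> NN j + 1 \<ge> (\<Sum>i=1..m. n i)"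
  shows "padeQ m alpha n NN \<noteq> 0
    \<and> degree (padeQ m alpha n NN) \<le> (\<Sum>i=1..m. n i)
    \<and> (\<forall>j. 1 \<le> j \<and> j \<le> m \<longrightarrow>
          degree (padeP m alpha n NN j) \<le> NN j
        \<and> (\<forall>k < NN j + n j + 1.
             fps_nth (fps_of_poly (padeQ m alpha n NN) * phi (alpha 0) (alpha j)
                      - fps_of_poly (padeP m alpha n NN j)) k = 0))"
proof -
  note apos = assms(2) and NNge = assms(6)
  define N where "N = (\<Sum>i=1..m. n i)"
  have NtotN: "totN m n = N" by (simp add: N_def totN_def)
  define a0 where "a0 = alpha 0"
  have a0pos: "a0 > 0" using apos[of 0] by (simp add: a0_def)
  define w where "w l = (\<Prod>j=1..m. pochhammer (alpha j + alpha 0 + of_nat (NN j) - of_nat N + of_nat l + 1) (n j)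
                           / pochhammer (alpha j + of_nat (NN j) - of_nat N + 1) (n j))" for l
  define A where "A = padeA m alpha n NN"
  have hA: "A i = AA a0 N w i" for i
    unfolding A_def padeA_def AA_def Let_def NtotN a0_def w_def by simp
  define bb where "bb j = alpha j + of_nat (NN j) - of_nat N + 1" for j
  have bbpos: "bb j > 0" if "1 \<le> j" "j \<le> m" for j
  proof -
    have "N \<le> NN j + 1" using NNge[OF that] N_def by simp
    hence "of_nat N \<le> (of_nat (NN j + 1) :: rat)" by (simp only: of_nat_le_iff)
    hence "of_nat N \<le> (of_nat (NN j) + 1 :: rat)" by simp
    thus ?thesis using apos[of j] that unfolding bb_def by linarith
  qed
  define Wp where "Wp = (\<Prod>j=1..m. smult (1 / pochhammer (bb j) (n j)) (pochhammer [:bb j, -1:] (n j)))"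
  have pW: "poly Wp x = (\<Prod>j=1..m. pochhammer (bb j - x) (n j) / pochhammer (bb j) (n j))" for x
    unfolding Wp_def by (simp add: poly_prod poly_pochhammer)
  have dW: "degree Wp \<le> N"
  proof -
    have "degree Wp \<le> (\<Sum>j=1..m. degree (smult (1 / pochhammer (bb j) (n j)) (pochhammer [:bb j, -1:] (n j))))"
      unfolding Wp_def using degree_prod_sum_le[of "{1..m}" "\<lambda>j. smult (1 / pochhammer (bb j) (n j)) (pochhammer [:bb j, -1:] (n j))"]
      by (simp only: o_def finite_atLeastAtMost simp_thms)
    also have "\<dots> \<le> (\<Sum>j=1..m. n j)"
    proof (rule sum_mono)
      fix j
      have "degree (pochhammer [:bb j, -1:] (n j)) \<le> n j" by (rule degree_pochhammer) simp
      thus "degree (smult (1 / pochhammer (bb j) (n j)) (pochhammer [:bb j, -1:] (n j))) \<le> n j"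
        using degree_smult_le order.trans by blast
    qed
    finally show ?thesis by (simp add: N_def)
  qed
  have W0: "poly Wp 0 = 1"
    unfolding pW
  proof (rule prod.neutral, intro ballI)
    fix j assume "j \<in> {1..m}"
    hence "pochhammer (bb j) (n j) > 0" using bbpos by (intro pochhammer_pos) auto
    thus "pochhammer (bb j - 0) (n j) / pochhammer (bb j) (n j) = 1" by simp
  qed
  have Ww: "poly Wp (- a0 - of_nat l) = w l" for l
    unfolding pW w_def
    by (rule prod.cong[OF refl]) (simp add: bb_def a0_def algebra_simps)
  have TTW: "TT a0 N w b = pochhammer a0 N * poly Wp b" for b
    by (rule TT_eq[OF a0pos dW W0 Ww])
  have Abig: "A i = 0" if "N < i" for i using that by (simp add: hA AA_big)
  have cQ: "coeff (padeQ m alpha n NN) i = A i" for i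
  proof -
    have "coeff (padeQ m alpha n NN) i = (\<Sum>k\<le>N. if k = i then A k else 0)"
      unfolding padeQ_def NtotN A_def by (simp add: coeff_sum coeff_monom)
    also have "\<dots> = A i" using Abig[of i] by (auto simp: sum.delta)
    finally show ?thesis .
  qed
  have Q0: "padeQ m alpha n NN \<noteq> 0"
  proof
    assume "padeQ m alpha n NN = 0"
    hence "A N = 0" using cQ[of N] by simp
    thus False by (simp add: hA AA_def)
  qed
  have dQ: "degree (padeQ m alpha n NN) \<le> N"
    unfolding padeQ_def NtotN
    by (rule degree_sum_le) (auto intro: order.trans[OF degree_monom_le])
  have rest: "degree (padeP m alpha n NN j) \<le> NN j
        \<and> (\<forall>k < NN j + n j + 1.
             fps_nth (fps_of_poly (padeQ m alpha n NN) * phi (alpha 0) (alpha j)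
                      - fps_of_poly (padeP m alpha n NN j)) k = 0)" if j: "1 \<le> j" "j \<le> m" for j
  proof
    show "degree (padeP m alpha n NN j) \<le> NN j"
      unfolding padeP_def
      by (rule degree_sum_le) (auto intro: order.trans[OF degree_monom_le])
    define r where "r x = pochhammer (alpha j) x / pochhammer (alpha j + a0) x" for x
    have cP: "coeff (padeP m alpha n NN j) mu = (if mu \<le> NN j then (\<Sum>i=0..mu. A i * r (mu - i)) else 0)" for mu
    proof -
      have "coeff (padeP m alpha n NN j) mu = (\<Sum>k\<le>NN j. if k = mu then padeC m alpha n NN j k else 0)"
        unfolding padeP_def by (simp add: coeff_sum coeff_monom)
      also have "\<dots> = (if mu \<le> NN j then padeC m alpha n NN j mu else 0)" by (simp add: sum.delta)
      also have "padeC m alpha n NN j mu = (\<Sum>i=0..mu. A i * r (mu - i))"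
        unfolding padeC_def NtotN A_def[symmetric] r_def a0_def
        by (rule sum.mono_neutral_left) (auto simp: Abig)
      finally show ?thesis by simp
    qed
    show "\<forall>k < NN j + n j + 1.
             fps_nth (fps_of_poly (padeQ m alpha n NN) * phi (alpha 0) (alpha j)
                      - fps_of_poly (padeP m alpha n NN j)) k = 0"
    proof (intro allI impI)
      fix k assume k: "k < NN j + n j + 1"
      have e: "fps_nth (fps_of_poly (padeQ m alpha n NN) * phi (alpha 0) (alpha j)
                      - fps_of_poly (padeP m alpha n NN j)) k =
            (\<Sum>i=0..k. A i * r (k - i)) - coeff (padeP m alpha n NN j) k"
        by (simp add: fps_mult_nth cQ phi_def r_def a0_def add.commute)
      show "fps_nth (fps_of_poly (padeQ m alpha n NN) * phi (alpha 0) (alpha j)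
                      - fps_of_poly (padeP m alpha n NN j)) k = 0"
      proof (cases "k \<le> NN j")
        case True
        thus ?thesis unfolding e cP by simp
      next
        case False
        have Nk: "N \<le> k" using False NNge[OF j] N_def by simp
        have "(\<Sum>i=0..k. A i * r (k - i)) = 0"
        proof -
          have "(\<Sum>i=0..k. A i * r (k - i)) =
            pochhammer (alpha j) (k-N) / pochhammer (alpha j+a0) (k-N) / pochhammer (alpha j + of_nat (k-N) + a0) N
            * TT a0 N w (alpha j + of_nat (k-N))"
            unfolding hA r_def by (rule conv_TT[OF _ a0pos Nk]) (use apos j in simp)
          also have "poly Wp (alpha j + of_nat (k-N)) = 0"
          proof -
            have bq: "bb j - (alpha j + of_nat (k-N)) = - of_nat (k - NN j - 1)"
              using Nk False unfolding bb_def by (simp add: of_nat_diff)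
            have "pochhammer (bb j - (alpha j + of_nat (k-N))) (n j) = 0"
              unfolding bq by (rule pochhammer_of_nat_eq_0_lemma) (use k False in simp)
            hence "pochhammer (bb j - (alpha j + of_nat (k-N))) (n j) / pochhammer (bb j) (n j) = 0" by simp
            thus ?thesis unfolding pW using j by (intro prod_zero) auto
          qed
          hence "TT a0 N w (alpha j + of_nat (k-N)) = 0" by (simp add: TTW)
          finally show ?thesis by simp
        qed
        thus ?thesis unfolding e cP using False by simp
      qed
    qed
  qed
  show ?thesis using Q0 dQ rest by (simp add: N_def)
qed

end
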